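(* Let $K$ be a $p$-adic number field and $f\in\mathcal{A}_K[1,1]$. Let $q$ be a positive power of $p$, and assume there exist $\zeta,\zeta'\in\mu_\infty$ with $f(\zeta)=\zeta'$. If $f(X)^q=f(X^q)$ (as Laurent series), then $f$ is special.
   Context: $\mathbb{C}_p$ is the completion of an algebraic closure of $\mathbb{Q}_p$ containing $K$; $\mu_\infty$ is the group of roots of unity in $\mathbb{C}_p$. $\mathcal{A}_K[1,1]$ is the set of Laurent series $\sum_{n\in\mathbb{Z}}f_nX^n$ with $f_n\in K$ and $|f_n|_p\to0$ as $|n|\to\infty$. $f$ is special if $f=\eta X^m$ for some $\eta\in\mu_\infty$ and $m\in\mathbb{Z}$. *)

theory Defs
  imports Complex_Main "HOL-Computational_Algebra.Polynomial"
begin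

text \<open>We work inside an abstract field L (type 'a) carrying an absolute value av.
  The predicate is_Cp characterises (L, av) up to isometric isomorphism as C_p:
  char 0, non-archimedean, |p| = 1/p, complete, algebraically closed, and the
  elements algebraic over Q are dense.\<close>

definition av_lim :: "('a::field \<Rightarrow> real) \<Rightarrow> (nat \<Rightarrow> 'a) \<Rightarrow> 'a \<Rightarrow> bool" where
  "av_lim av s l \<longleftrightarrow> (\<forall>e>0. \<exists>N. \<forall>n\<ge>N. av (s n - l) < e)"

definition av_cauchy :: "('a::field \<Rightarrow> real) \<Rightarrow> (nat \<Rightarrow> 'a) \<Rightarrow> bool" where
  "av_cauchy av s \<longleftrightarrow> (\<forall>e>0. \<exists>N. \<forall>m\<ge>N. \<forall>n\<ge>N. av (s m - s n) < e)"

definition algebraic_over_Q :: "'a::field_char_0 \<Rightarrow> bool" where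
  "algebraic_over_Q x \<longleftrightarrow>
     (\<exists>P::'a poly. P \<noteq> 0 \<and> (\<forall>i. coeff P i \<in> \<rat>) \<and> poly P x = 0)"

definition is_Cp :: "nat \<Rightarrow> ('a::field_char_0 \<Rightarrow> real) \<Rightarrow> bool" where
  "is_Cp p av \<longleftrightarrow>
     prime p \<and>
     (\<forall>x. av x \<ge> 0) \<and> (\<forall>x. av x = 0 \<longleftrightarrow> x = 0) \<and>
     (\<forall>x y. av (x * y) = av x * av y) \<and>
     (\<forall>x y. av (x + y) \<le> max (av x) (av y)) \<and>
     av (of_nat p) = 1 / real p \<and>
     (\<forall>s. av_cauchy av s \<longrightarrow> (\<exists>l. av_lim av s l)) \<and>
     (\<forall>P::'a poly. degree P > 0 \<longrightarrow> (\<exists>x. poly P x = 0)) \<and>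
     (\<forall>x. \<exists>s. (\<forall>n. algebraic_over_Q (s n)) \<and> av_lim av s x)"

text \<open>The copy of Q_p inside L: the closure of Q.\<close>
definition Qp_in :: "('a::field_char_0 \<Rightarrow> real) \<Rightarrow> 'a set" where
  "Qp_in av = {x. \<exists>s. (\<forall>n. s n \<in> \<rat>) \<and> av_lim av s x}"

definition padic_number_field :: "('a::field_char_0 \<Rightarrow> real) \<Rightarrow> 'a set \<Rightarrow> bool" where
  "padic_number_field av K \<longleftrightarrow>
     0 \<in> K \<and> 1 \<in> K \<and>
     (\<forall>x\<in>K. \<forall>y\<in>K. x + y \<in> K \<and> x * y \<in> K) \<and>
     (\<forall>x\<in>K. - x \<in> K \<and> inverse x \<in> K) \<and>
     Qp_in av \<subseteq> K \<and>
     (\<exists>B. finite B \<and> B \<subseteq> K \<and>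
        (\<forall>x\<in>K. \<exists>c. (\<forall>b\<in>B. c b \<in> Qp_in av) \<and> x = (\<Sum>b\<in>B. c b * b)))"

definition roots_of_unity :: "'a::field set" where
  "roots_of_unity = {z. \<exists>n>0. z ^ n = 1}"

text \<open>Laurent series are coefficient functions int => 'a. A_K[1,1]:\<close>
definition A_K11 :: "('a::field_char_0 \<Rightarrow> real) \<Rightarrow> 'a set \<Rightarrow> (int \<Rightarrow> 'a) \<Rightarrow> bool" where
  "A_K11 av K f \<longleftrightarrow> (\<forall>n. f n \<in> K) \<and>
     (\<forall>e>0. \<exists>N::nat. \<forall>n. \<bar>n\<bar> \<ge> int N \<longrightarrow> av (f n) < e)"

definition laurent_eval_to :: "('a::field_char_0 \<Rightarrow> real) \<Rightarrow> (int \<Rightarrow> 'a) \<Rightarrow> 'a \<Rightarrow> 'a \<Rightarrow> bool" where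
  "laurent_eval_to av f z v \<longleftrightarrow>
     av_lim av (\<lambda>N. \<Sum>n\<in>{- int N..int N}. f n * z powi n) v"

definition laurent_mult :: "('a::field_char_0 \<Rightarrow> real) \<Rightarrow> (int \<Rightarrow> 'a) \<Rightarrow> (int \<Rightarrow> 'a) \<Rightarrow> int \<Rightarrow> 'a" where
  "laurent_mult av f g n =
     (THE l. av_lim av (\<lambda>N. \<Sum>k\<in>{- int N..int N}. f k * g (n - k)) l)"

definition laurent_one :: "int \<Rightarrow> 'a::field" where
  "laurent_one n = (if n = 0 then 1 else 0)"

primrec laurent_pow :: "('a::field_char_0 \<Rightarrow> real) \<Rightarrow> (int \<Rightarrow> 'a) \<Rightarrow> nat \<Rightarrow> int \<Rightarrow> 'a" where
  "laurent_pow av f 0 = laurent_one"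
| "laurent_pow av f (Suc m) = laurent_mult av (laurent_pow av f m) f"

definition laurent_subst_pow :: "(int \<Rightarrow> 'a::zero) \<Rightarrow> nat \<Rightarrow> int \<Rightarrow> 'a" where
  "laurent_subst_pow f q n = (if int q dvd n then f (n div int q) else 0)"

definition special :: "(int \<Rightarrow> 'a::field) \<Rightarrow> bool" where
  "special f \<longleftrightarrow> (\<exists>\<eta>\<in>roots_of_unity. \<exists>m::int. f = (\<lambda>n. if n = m then \<eta> else 0))"

end

theory Submission
  imports Defs
begin



definition nullz :: "('a::field_char_0 \<Rightarrow> real) \<Rightarrow> (int \<Rightarrow> 'a) \<Rightarrow> bool" where
  "nullz av c \<longleftrightarrow> (\<forall>e>0. \<exists>M::int. \<forall>k. M < \<bar>k\<bar> \<longrightarrow> av (c k) \<le> e)"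

definition psum :: "(int \<Rightarrow> 'a::field_char_0) \<Rightarrow> nat \<Rightarrow> 'a" where
  "psum c N = (\<Sum>k\<in>{- int N..int N}. c k)"

definition zs :: "('a::field_char_0 \<Rightarrow> real) \<Rightarrow> (int \<Rightarrow> 'a) \<Rightarrow> 'a" where
  "zs av c = (THE l. av_lim av (psum c) l)"

locale vf =
  fixes av :: "'a::field_char_0 \<Rightarrow> real"
  assumes nonneg: "av x \<ge> 0"
    and zero_iff: "av x = 0 \<longleftrightarrow> x = 0"
    and multa: "av (x * y) = av x * av y"
    and ultra: "av (x + y) \<le> max (av x) (av y)"
    and complete: "av_cauchy av s \<Longrightarrow> \<exists>l. av_lim av s l"
begin

lemma av0[simp]: "av 0 = 0" using zero_iff by simp

lemma av1[simp]: "av 1 = 1"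
proof -
  have "av 1 = av 1 * av 1" using multa[of 1 1] by simp
  moreover have "av 1 \<noteq> 0" using zero_iff by simp
  ultimately show ?thesis by simp
qed

lemma av_minus[simp]: "av (- x) = av x"
proof -
  have "av (-1) * av (-1) = 1" using multa[of "-1" "-1"] by simp
  moreover have "av (-1) \<ge> 0" by (rule nonneg)
  ultimately have "av (-1) = 1"
    using power2_eq_1_iff[of "av (-1)"] by (auto simp: power2_eq_square)
  then show ?thesis using multa[of "-1" x] by simp
qed

lemma av_sym: "av (x - y) = av (y - x)"
  by (metis av_minus minus_diff_eq)

lemma ultra_diff: "av (x - z) \<le> max (av (x - y)) (av (y - z))"
  using ultra[of "x - y" "y - z"] by simp

lemma av_of_nat: "av (of_nat n) \<le> 1"
proof (induction n)
  case 0 then show ?case by simp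
next
  case (Suc n)
  have "av (of_nat (Suc n)) = av (of_nat n + 1)" by (simp add: add.commute)
  also have "\<dots> \<le> max (av (of_nat n)) (av 1)" by (rule ultra)
  finally show ?case using Suc by simp
qed

lemma av_of_int: "av (of_int n) \<le> 1"
proof (cases "n \<ge> 0")
  case True
  then have "of_int n = (of_nat (nat n) :: 'a)" by simp
  then show ?thesis using av_of_nat by simp
next
  case False
  then have "of_int n = - (of_nat (nat (-n)) :: 'a)" by simp
  then show ?thesis using av_of_nat by simp
qed

lemma sum_bound:
  assumes "finite S" "e \<ge> 0" "\<And>k. k \<in> S \<Longrightarrow> av (c k) \<le> e"
  shows "av (sum c S) \<le> e"
  using assms
proof (induction S rule: finite_induct)
  case empty then show ?case by simp
next
  case (insert x F)
  have "av (sum c (insert x F)) = av (c x + sum c F)" using insert by simp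
  also have "\<dots> \<le> max (av (c x)) (av (sum c F))" by (rule ultra)
  also have "\<dots> \<le> e" using insert by simp
  finally show ?case .
qed

lemma av_strict:
  assumes "av y < av x" shows "av (x + y) = av x"
proof -
  have "av x \<le> max (av (x + y)) (av (-y))" using ultra[of "x+y" "-y"] by simp
  then have "av x \<le> av (x + y)" using assms by auto
  moreover have "av (x + y) \<le> av x" using ultra[of x y] assms by simp
  ultimately show ?thesis by simp
qed

lemma eq_approx:
  assumes "\<And>e. e > 0 \<Longrightarrow> av (x - y) \<le> e" shows "x = y"
proof (rule ccontr)
  assume "x \<noteq> y"
  then have "av (x - y) > 0" using zero_iff nonneg by (metis eq_iff_diff_eq_0 order_le_less)
  then have "av (x - y) \<le> av (x - y) / 2" using assms[of "av (x-y)/2"] by simp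
  with \<open>av (x - y) > 0\<close> show False by simp
qed

lemma lim_unique:
  assumes "av_lim av s l" "av_lim av s m" shows "l = m"
proof (rule eq_approx)
  fix e :: real assume "e > 0"
  obtain N1 where N1: "\<forall>n\<ge>N1. av (s n - l) < e" using assms(1) \<open>e>0\<close> unfolding av_lim_def by blast
  obtain N2 where N2: "\<forall>n\<ge>N2. av (s n - m) < e" using assms(2) \<open>e>0\<close> unfolding av_lim_def by blast
  let ?n = "max N1 N2"
  have "av (l - m) \<le> max (av (l - s ?n)) (av (s ?n - m))" by (rule ultra_diff)
  also have "\<dots> \<le> e" using N1 N2 av_sym[of l "s ?n"] by (simp add: less_imp_le)
  finally show "av (l - m) \<le> e" .
qed

lemma lim_eventually_const:
  assumes "\<And>n. n \<ge> N0 \<Longrightarrow> s n = l" shows "av_lim av s l"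
  unfolding av_lim_def
proof (intro allI impI)
  fix e :: real assume "e > 0"
  show "\<exists>N. \<forall>n\<ge>N. av (s n - l) < e" using assms \<open>e>0\<close> by (intro exI[of _ N0]) auto
qed

lemma lim_add:
  assumes "av_lim av s l" "av_lim av t m"
  shows "av_lim av (\<lambda>n. s n + t n) (l + m)"
  unfolding av_lim_def
proof (intro allI impI)
  fix e :: real assume "e > 0"
  obtain N1 where N1: "\<forall>n\<ge>N1. av (s n - l) < e" using assms(1) \<open>e>0\<close> unfolding av_lim_def by blast
  obtain N2 where N2: "\<forall>n\<ge>N2. av (t n - m) < e" using assms(2) \<open>e>0\<close> unfolding av_lim_def by blast
  show "\<exists>N. \<forall>n\<ge>N. av (s n + t n - (l + m)) < e"
  proof (intro exI allI impI)
    fix n assume "n \<ge> max N1 N2"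
    have "av (s n + t n - (l + m)) = av ((s n - l) + (t n - m))" by (simp add: algebra_simps)
    also have "\<dots> \<le> max (av (s n - l)) (av (t n - m))" by (rule ultra)
    also have "\<dots> < e" using N1 N2 \<open>n \<ge> max N1 N2\<close> by auto
    finally show "av (s n + t n - (l + m)) < e" .
  qed
qed

lemma lim_cmult:
  assumes "av_lim av s l"
  shows "av_lim av (\<lambda>n. x * s n) (x * l)"
proof (cases "x = 0")
  case True then show ?thesis unfolding av_lim_def by simp
next
  case False
  then have ax: "av x > 0" using zero_iff nonneg by (metis order_le_less)
  show ?thesis unfolding av_lim_def
  proof (intro allI impI)
    fix e :: real assume "e > 0"
    then obtain N where N: "\<forall>n\<ge>N. av (s n - l) < e / av x" using assms ax unfolding av_lim_def by (meson divide_pos_pos)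
    show "\<exists>N. \<forall>n\<ge>N. av (x * s n - x * l) < e"
    proof (intro exI allI impI)
      fix n assume "n \<ge> N"
      have "av (x * s n - x * l) = av x * av (s n - l)" by (simp add: multa[symmetric] algebra_simps)
      also have "\<dots> < av x * (e / av x)" using N \<open>n\<ge>N\<close> ax by (intro mult_strict_left_mono) auto
      finally show "av (x * s n - x * l) < e" using ax by simp
    qed
  qed
qed

lemma lim_le:
  assumes "av_lim av s l" "e \<ge> 0" "\<And>n. n \<ge> N0 \<Longrightarrow> av (s n - y) \<le> e"
  shows "av (l - y) \<le> e"
proof (rule ccontr)
  assume "\<not> av (l - y) \<le> e"
  then have gt: "av (l - y) > e" by simp
  define d where "d = av (l - y) / 2"
  have "d > 0" using gt assms(2) by (simp add: d_def)
  then obtain N where N: "\<forall>n\<ge>N. av (s n - l) < d" using assms(1) unfolding av_lim_def by blast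
  let ?n = "max N N0"
  have "av (l - y) \<le> max (av (l - s ?n)) (av (s ?n - y))" by (rule ultra_diff)
  also have "\<dots> \<le> max d e"
  proof -
    have "av (s ?n - l) < d" using N by simp
    then show ?thesis using assms(3)[of ?n] av_sym[of l "s ?n"] by (auto simp: le_max_iff_disj)
  qed
  also have "\<dots> < av (l - y)" using gt \<open>d>0\<close> by (simp add: d_def)
  finally show False by simp
qed

end


context vf begin

lemma finite_in_interval:
  assumes "finite (S::int set)" shows "\<exists>N::nat. S \<subseteq> {- int N..int N}"
  using assms
proof (induction S rule: finite_induct)
  case empty then show ?case by simp
next
  case (insert x F)
  then obtain N where "F \<subseteq> {- int N..int N}" by blast
  then have "insert x F \<subseteq> {- int (max N (nat \<bar>x\<bar>))..int (max N (nat \<bar>x\<bar>))}"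
    by (auto simp: subset_iff)
  then show ?case by blast
qed

lemma psum_diff:
  assumes "n \<le> m"
  shows "psum c m - psum c n = sum c ({- int m..int m} - {- int n..int n})"
  unfolding psum_def using assms by (subst sum_diff) auto

lemma psum_cauchy:
  assumes "nullz av c" shows "av_cauchy av (psum c)"
  unfolding av_cauchy_def
proof (intro allI impI)
  fix e :: real assume "e > 0"
  then obtain M where M: "\<forall>k. M < \<bar>k\<bar> \<longrightarrow> av (c k) \<le> e/2"
    using assms unfolding nullz_def by (meson half_gt_zero)
  have key: "av (psum c m - psum c n) \<le> e/2" if "nat M \<le> n" "n \<le> m" for m n
  proof -
    have "av (psum c m - psum c n) = av (sum c ({- int m..int m} - {- int n..int n}))"
      using psum_diff[OF that(2), of c] by simp
    also have "\<dots> \<le> e/2"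
      using M that \<open>e>0\<close> by (intro sum_bound) auto
    finally show ?thesis .
  qed
  show "\<exists>N. \<forall>m\<ge>N. \<forall>n\<ge>N. av (psum c m - psum c n) < e"
  proof (intro exI allI impI)
    fix m n assume "nat M \<le> m" "nat M \<le> n"
    show "av (psum c m - psum c n) < e"
    proof (cases "n \<le> m")
      case True then show ?thesis using key \<open>nat M \<le> n\<close> \<open>e>0\<close> by fastforce
    next
      case False then show ?thesis using key[of m n] \<open>nat M \<le> m\<close> \<open>e>0\<close> av_sym[of "psum c m"] by fastforce
    qed
  qed
qed

lemma zs_lim:
  assumes "nullz av c" shows "av_lim av (psum c) (zs av c)"
proof -
  obtain l where l: "av_lim av (psum c) l" using complete psum_cauchy[OF assms] by blast
  show ?thesis unfolding zs_def
    by (rule theI[of _ l]) (use l lim_unique in blast)+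
qed

lemma zs_tail:
  assumes "nullz av c" "e \<ge> 0" "\<And>k. M < \<bar>k\<bar> \<Longrightarrow> av (c k) \<le> e"
    "finite S" "{-M..M} \<subseteq> S"
  shows "av (zs av c - sum c S) \<le> e"
proof -
  obtain N0 where N0: "S \<subseteq> {- int N0..int N0}" using finite_in_interval[OF assms(4)] by blast
  show ?thesis
  proof (rule lim_le[OF zs_lim[OF assms(1)] assms(2)])
    fix n assume "N0 \<le> n"
    then have sub: "S \<subseteq> {- int n..int n}" using N0 by auto
    have "psum c n - sum c S = sum c ({- int n..int n} - S)"
      unfolding psum_def using sub assms(4) by (subst sum_diff) auto
    moreover have "av (sum c ({- int n..int n} - S)) \<le> e"
    proof (rule sum_bound)
      fix k assume "k \<in> {- int n..int n} - S"
      then have "k \<notin> {-M..M}" using assms(5) by blast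
      then have "M < \<bar>k\<bar>" by auto
      then show "av (c k) \<le> e" by (rule assms(3))
    qed (use assms in auto)
    ultimately show "av (psum c n - sum c S) \<le> e" by simp
  qed
qed

lemma zs_bound:
  assumes "nullz av c" "e \<ge> 0" "\<And>k. av (c k) \<le> e"
  shows "av (zs av c) \<le> e"
  using zs_tail[OF assms(1,2), of "-1" "{}"] assms(3) by simp

lemma null_bounded:
  assumes "nullz av c" shows "\<exists>B>0. \<forall>k. av (c k) \<le> B"
proof -
  obtain M where M: "\<forall>k. M < \<bar>k\<bar> \<longrightarrow> av (c k) \<le> 1"
    using assms unfolding nullz_def by (meson zero_less_one)
  define B where "B = max 1 (Max ((\<lambda>k. av (c k)) ` {-M..M}))"
  have "av (c k) \<le> B" for k
  proof (cases "M < \<bar>k\<bar>")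
    case True then have "av (c k) \<le> 1" using M by blast
    then show ?thesis by (simp add: B_def)
  next
    case False
    then have "av (c k) \<le> Max ((\<lambda>k. av (c k)) ` {-M..M})" by (intro Max_ge) (auto intro!: imageI)
    then show ?thesis by (simp add: B_def)
  qed
  moreover have "B > 0" by (simp add: B_def)
  ultimately show ?thesis by blast
qed

lemma zs_strict:
  assumes "nullz av c" "\<And>k. av (c k) < T"
  shows "av (zs av c) < T"
proof -
  have T: "T > 0" using assms(2)[of 0] nonneg[of "c 0"] by simp
  obtain M where M: "\<forall>k. M < \<bar>k\<bar> \<longrightarrow> av (c k) \<le> T/2"
    using assms(1) T unfolding nullz_def by (meson half_gt_zero)
  define d where "d = max (T/2) (Max ((\<lambda>k. av (c k)) ` {-\<bar>M\<bar>..\<bar>M\<bar>}))"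
  have "av (c k) \<le> d" for k
  proof (cases "M < \<bar>k\<bar>")
    case True then have "av (c k) \<le> T/2" using M by blast
    then show ?thesis by (simp add: d_def)
  next
    case False
    then have "av (c k) \<le> Max ((\<lambda>k. av (c k)) ` {-\<bar>M\<bar>..\<bar>M\<bar>})" by (intro Max_ge) (auto intro!: imageI)
    then show ?thesis by (simp add: d_def)
  qed
  moreover have "d < T"
  proof -
    have "Max ((\<lambda>k. av (c k)) ` {-\<bar>M\<bar>..\<bar>M\<bar>}) \<in> (\<lambda>k. av (c k)) ` {-\<bar>M\<bar>..\<bar>M\<bar>}"
      by (intro Max_in) auto
    then have "Max ((\<lambda>k. av (c k)) ` {-\<bar>M\<bar>..\<bar>M\<bar>}) < T" using assms(2) by auto
    then show ?thesis using T by (simp add: d_def)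
  qed
  moreover have "d \<ge> 0" using T by (simp add: d_def)
  ultimately show ?thesis using zs_bound[OF assms(1), of d] by fastforce
qed

lemma null_add: "nullz av c \<Longrightarrow> nullz av d \<Longrightarrow> nullz av (\<lambda>k. c k + d k)"
  unfolding nullz_def
proof (intro allI impI)
  fix e :: real assume a: "\<forall>e>0. \<exists>M. \<forall>k. M < \<bar>k\<bar> \<longrightarrow> av (c k) \<le> e"
    "\<forall>e>0. \<exists>M. \<forall>k. M < \<bar>k\<bar> \<longrightarrow> av (d k) \<le> e" and "e > 0"
  then obtain M1 M2 where M1: "\<forall>k. M1 < \<bar>k\<bar> \<longrightarrow> av (c k) \<le> e"
    and M2: "\<forall>k. M2 < \<bar>k\<bar> \<longrightarrow> av (d k) \<le> e" by blast
  show "\<exists>M. \<forall>k. M < \<bar>k\<bar> \<longrightarrow> av (c k + d k) \<le> e"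
  proof (intro exI allI impI)
    fix k :: int assume "max M1 M2 < \<bar>k\<bar>"
    then have "max (av (c k)) (av (d k)) \<le> e" using M1 M2 by auto
    then show "av (c k + d k) \<le> e" using ultra[of "c k" "d k"] by linarith
  qed
qed

lemma null_cmult: "nullz av c \<Longrightarrow> nullz av (\<lambda>k. x * c k)"
proof -
  assume c: "nullz av c"
  show ?thesis
  proof (cases "x = 0")
    case True then show ?thesis unfolding nullz_def by simp
  next
    case False
    then have ax: "av x > 0" using zero_iff nonneg by (metis order_le_less)
    show ?thesis unfolding nullz_def
    proof (intro allI impI)
      fix e :: real assume "e > 0"
      then obtain M where M: "\<forall>k. M < \<bar>k\<bar> \<longrightarrow> av (c k) \<le> e / av x"
        using c ax unfolding nullz_def by (meson divide_pos_pos)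
      show "\<exists>M. \<forall>k. M < \<bar>k\<bar> \<longrightarrow> av (x * c k) \<le> e"
      proof (intro exI allI impI)
        fix k assume "M < \<bar>k\<bar>"
        then have "av x * av (c k) \<le> av x * (e / av x)" using M ax by (intro mult_left_mono) auto
        then show "av (x * c k) \<le> e" using ax by (simp add: multa)
      qed
    qed
  qed
qed

lemma null_mono:
  assumes "nullz av c" "\<And>k. av (d k) \<le> av (c k)" shows "nullz av d"
  using assms unfolding nullz_def by (meson order_trans)

lemma null_bdd_mult:
  assumes "nullz av c" "\<And>k. av (d k) \<le> B" shows "nullz av (\<lambda>k. d k * c k)"
proof -
  have B: "B \<ge> 0" using assms(2)[of 0] nonneg[of "d 0"] by simp
  show ?thesis unfolding nullz_def
  proof (intro allI impI)
    fix e :: real assume "e > 0"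
    then obtain M where M: "\<forall>k. M < \<bar>k\<bar> \<longrightarrow> av (c k) \<le> e / (B + 1)"
    proof -
      have "e / (B + 1) > 0" using \<open>e>0\<close> B by simp
      then show ?thesis using assms(1) that unfolding nullz_def by blast
    qed
    show "\<exists>M. \<forall>k. M < \<bar>k\<bar> \<longrightarrow> av (d k * c k) \<le> e"
    proof (intro exI allI impI)
      fix k assume "M < \<bar>k\<bar>"
      have "av (d k * c k) = av (d k) * av (c k)" by (rule multa)
      also have "\<dots> \<le> (B + 1) * (e / (B + 1))"
        using M \<open>M < \<bar>k\<bar>\<close> assms(2)[of k] B nonneg by (intro mult_mono) auto
      finally show "av (d k * c k) \<le> e" using B by simp
    qed
  qed
qed

lemma zs_add:
  assumes "nullz av c" "nullz av d"
  shows "zs av (\<lambda>k. c k + d k) = zs av c + zs av d"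
proof -
  have "av_lim av (\<lambda>n. psum c n + psum d n) (zs av c + zs av d)"
    by (rule lim_add[OF zs_lim[OF assms(1)] zs_lim[OF assms(2)]])
  moreover have "(\<lambda>n. psum c n + psum d n) = psum (\<lambda>k. c k + d k)"
    unfolding psum_def by (simp add: sum.distrib)
  ultimately show ?thesis using zs_lim[OF null_add[OF assms]] lim_unique by metis
qed

lemma zs_cmult:
  assumes "nullz av c"
  shows "zs av (\<lambda>k. x * c k) = x * zs av c"
proof -
  have "av_lim av (\<lambda>n. x * psum c n) (x * zs av c)"
    by (rule lim_cmult[OF zs_lim[OF assms(1)]])
  moreover have "(\<lambda>n. x * psum c n) = psum (\<lambda>k. x * c k)"
    unfolding psum_def by (simp add: sum_distrib_left)
  ultimately show ?thesis using zs_lim[OF null_cmult[OF assms]] lim_unique by metis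
qed

lemma zs_single: "zs av (\<lambda>k. if k = a then v else 0) = v"
proof -
  have n: "nullz av (\<lambda>k. if k = a then v else 0)"
    unfolding nullz_def by (intro allI impI exI[of _ "\<bar>a\<bar>"]) auto
  have "av_lim av (psum (\<lambda>k. if k = a then v else 0)) v"
  proof (rule lim_eventually_const[of "nat \<bar>a\<bar>"])
    fix n assume "nat \<bar>a\<bar> \<le> n"
    then have "a \<in> {- int n..int n}" by auto
    then show "psum (\<lambda>k. if k = a then v else 0) n = v" unfolding psum_def by simp
  qed
  then show ?thesis using zs_lim[OF n] lim_unique by metis
qed

end


context vf begin

lemma zs_eqI:
  assumes "nullz av c" "nullz av d"
    "\<And>e. e > 0 \<Longrightarrow> \<exists>M S S'. (\<forall>k. M < \<bar>k\<bar> \<longrightarrow> av (c k) \<le> e \<and> av (d k) \<le> e) \<and>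
        finite S \<and> finite S' \<and> {-M..M} \<subseteq> S \<and> {-M..M} \<subseteq> S' \<and> sum c S = sum d S'"
  shows "zs av c = zs av d"
proof (rule eq_approx)
  fix e :: real assume "e > 0"
  then obtain M S S' where H: "\<forall>k. M < \<bar>k\<bar> \<longrightarrow> av (c k) \<le> e \<and> av (d k) \<le> e"
    "finite S" "finite S'" "{-M..M} \<subseteq> S" "{-M..M} \<subseteq> S'" "sum c S = sum d S'"
    using assms(3) by blast
  have 1: "av (zs av c - sum c S) \<le> e"
    using H \<open>e>0\<close> by (intro zs_tail[OF assms(1)]) auto
  have 2: "av (zs av d - sum d S') \<le> e"
    using H \<open>e>0\<close> by (intro zs_tail[OF assms(2)]) auto
  have "av (zs av c - zs av d) \<le> max (av (zs av c - sum c S)) (av (sum c S - zs av d))"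
    by (rule ultra_diff)
  also have "\<dots> \<le> e" using 1 2 H(6) av_sym[of "sum d S'" "zs av d"] by simp
  finally show "av (zs av c - zs av d) \<le> e" .
qed

lemma null_reflect:
  assumes "nullz av c" shows "nullz av (\<lambda>k. c (t - k))"
  unfolding nullz_def
proof (intro allI impI)
  fix e :: real assume "e > 0"
  then obtain M where M: "\<forall>k. M < \<bar>k\<bar> \<longrightarrow> av (c k) \<le> e" using assms unfolding nullz_def by blast
  show "\<exists>M. \<forall>k. M < \<bar>k\<bar> \<longrightarrow> av (c (t - k)) \<le> e"
    by (rule exI[of _ "M + \<bar>t\<bar>"]) (use M in auto)
qed

lemma zs_reflect:
  assumes "nullz av c" shows "zs av (\<lambda>k. c (t - k)) = zs av c"
proof (rule zs_eqI[OF null_reflect[OF assms] assms])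
  fix e :: real assume "e > 0"
  then obtain M0 where M0: "\<forall>k. M0 < \<bar>k\<bar> \<longrightarrow> av (c k) \<le> e" using assms unfolding nullz_def by blast
  define M where "M = M0 + \<bar>t\<bar>"
  define R where "R = M + \<bar>t\<bar>"
  have tails: "\<forall>k. M < \<bar>k\<bar> \<longrightarrow> av (c (t - k)) \<le> e \<and> av (c k) \<le> e"
    using M0 by (auto simp: M_def)
  have eq: "sum (\<lambda>k. c (t - k)) {-R..R} = sum c {t-R..t+R}"
    by (rule sum.reindex_bij_witness[of _ "\<lambda>b. t - b" "\<lambda>a. t - a"]) auto
  have sub: "{-M..M} \<subseteq> {-R..R}" "{-M..M} \<subseteq> {t-R..t+R}" by (auto simp: R_def M_def)
  show "\<exists>M S S'. (\<forall>k. M < \<bar>k\<bar> \<longrightarrow> av (c (t - k)) \<le> e \<and> av (c k) \<le> e) \<and>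
        finite S \<and> finite S' \<and> {-M..M} \<subseteq> S \<and> {-M..M} \<subseteq> S' \<and> sum (\<lambda>k. c (t - k)) S = sum c S'"
    using tails eq sub by blast
qed

lemma zs_shift:
  assumes "nullz av c" shows "zs av (\<lambda>k. c (k + t)) = zs av c"
proof -
  define c' where "c' = (\<lambda>k. c (t - k))"
  have n': "nullz av c'" unfolding c'_def by (rule null_reflect[OF assms])
  have "(\<lambda>k. c (k + t)) = (\<lambda>k. c' (0 - k))" by (auto simp: c'_def add.commute)
  then have "zs av (\<lambda>k. c (k + t)) = zs av c'" using zs_reflect[OF n', of 0] by simp
  also have "\<dots> = zs av c" unfolding c'_def by (rule zs_reflect[OF assms])
  finally show ?thesis .
qed

lemma fubini:
  assumes H: "\<And>e. e > 0 \<Longrightarrow> \<exists>M::int. \<forall>j k. (M < \<bar>j\<bar> \<or> M < \<bar>k\<bar>) \<longrightarrow> av (d j k) \<le> e"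
  shows "zs av (\<lambda>k. zs av (\<lambda>j. d j k)) = zs av (\<lambda>j. zs av (\<lambda>k. d j k))"
proof -
  have rowj: "nullz av (\<lambda>j. d j k)" for k
    unfolding nullz_def using H by meson
  have rowk: "nullz av (\<lambda>k. d j k)" for j
    unfolding nullz_def using H by meson
  have nr: "nullz av (\<lambda>k. zs av (\<lambda>j. d j k))"
    unfolding nullz_def
  proof (intro allI impI)
    fix e :: real assume "e > 0"
    then obtain M where M: "\<forall>j k. (M < \<bar>j\<bar> \<or> M < \<bar>k\<bar>) \<longrightarrow> av (d j k) \<le> e" using H by blast
    show "\<exists>M. \<forall>k. M < \<bar>k\<bar> \<longrightarrow> av (zs av (\<lambda>j. d j k)) \<le> e"
      using M \<open>e>0\<close> by (intro exI[of _ M] allI impI zs_bound[OF rowj]) auto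
  qed
  have nc: "nullz av (\<lambda>j. zs av (\<lambda>k. d j k))"
    unfolding nullz_def
  proof (intro allI impI)
    fix e :: real assume "e > 0"
    then obtain M where M: "\<forall>j k. (M < \<bar>j\<bar> \<or> M < \<bar>k\<bar>) \<longrightarrow> av (d j k) \<le> e" using H by blast
    show "\<exists>M. \<forall>j. M < \<bar>j\<bar> \<longrightarrow> av (zs av (\<lambda>k. d j k)) \<le> e"
      using M \<open>e>0\<close> by (intro exI[of _ M] allI impI zs_bound[OF rowk]) auto
  qed
  show ?thesis
  proof (rule eq_approx)
    fix e :: real assume "e > 0"
    then obtain M where M: "\<forall>j k. (M < \<bar>j\<bar> \<or> M < \<bar>k\<bar>) \<longrightarrow> av (d j k) \<le> e" using H by blast
    let ?I = "{-M..M}"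
    let ?D = "\<Sum>k\<in>?I. \<Sum>j\<in>?I. d j k"
    have a1: "av (zs av (\<lambda>k. zs av (\<lambda>j. d j k)) - (\<Sum>k\<in>?I. zs av (\<lambda>j. d j k))) \<le> e"
      using M \<open>e>0\<close> by (intro zs_tail[OF nr] zs_bound[OF rowj]) auto
    have a2: "av ((\<Sum>k\<in>?I. zs av (\<lambda>j. d j k)) - ?D) \<le> e"
    proof -
      have "(\<Sum>k\<in>?I. zs av (\<lambda>j. d j k)) - ?D = (\<Sum>k\<in>?I. zs av (\<lambda>j. d j k) - (\<Sum>j\<in>?I. d j k))"
        by (simp add: sum_subtractf)
      also have "av \<dots> \<le> e"
        using M \<open>e>0\<close> by (intro sum_bound zs_tail[OF rowj]) auto
      finally show ?thesis .
    qed
    have b1: "av (zs av (\<lambda>j. zs av (\<lambda>k. d j k)) - (\<Sum>j\<in>?I. zs av (\<lambda>k. d j k))) \<le> e"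
      using M \<open>e>0\<close> by (intro zs_tail[OF nc] zs_bound[OF rowk]) auto
    have b2: "av ((\<Sum>j\<in>?I. zs av (\<lambda>k. d j k)) - ?D) \<le> e"
    proof -
      have "?D = (\<Sum>j\<in>?I. \<Sum>k\<in>?I. d j k)" by (rule sum.swap)
      then have "(\<Sum>j\<in>?I. zs av (\<lambda>k. d j k)) - ?D = (\<Sum>j\<in>?I. zs av (\<lambda>k. d j k) - (\<Sum>k\<in>?I. d j k))"
        by (simp add: sum_subtractf)
      also have "av \<dots> \<le> e"
        using M \<open>e>0\<close> by (intro sum_bound zs_tail[OF rowk]) auto
      finally show ?thesis .
    qed
    let ?L = "zs av (\<lambda>k. zs av (\<lambda>j. d j k))"
    let ?R = "zs av (\<lambda>j. zs av (\<lambda>k. d j k))"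
    have "av (?L - ?D) \<le> e" using ultra_diff[of ?L ?D "\<Sum>k\<in>?I. zs av (\<lambda>j. d j k)"] a1 a2 by simp
    moreover have "av (?D - ?R) \<le> e"
      using ultra_diff[of ?R ?D "\<Sum>j\<in>?I. zs av (\<lambda>k. d j k)"] b1 b2 av_sym[of ?D ?R] by simp
    ultimately show "av (?L - ?R) \<le> e" using ultra_diff[of ?L ?R ?D] by simp
  qed
qed

end



definition Dz :: "(int \<Rightarrow> 'a::field_char_0) \<Rightarrow> int \<Rightarrow> 'a" where
  "Dz F = (\<lambda>n. of_int n * F n)"

definition zmono :: "int \<Rightarrow> 'a::field_char_0 \<Rightarrow> int \<Rightarrow> 'a" where
  "zmono a x = (\<lambda>n. if n = a then x else 0)"

context vf begin

lemma psum_eta: "psum c = (\<lambda>N. \<Sum>k\<in>{- int N..int N}. c k)"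
  by (rule ext) (simp add: psum_def)

lemma mul_zs: "laurent_mult av F G n = zs av (\<lambda>k. F k * G (n - k))"
  by (simp add: laurent_mult_def zs_def psum_eta)

lemma null_shift:
  assumes "nullz av c" shows "nullz av (\<lambda>k. c (k + t))"
  unfolding nullz_def
proof (intro allI impI)
  fix e :: real assume "e > 0"
  then obtain M where M: "\<forall>k. M < \<bar>k\<bar> \<longrightarrow> av (c k) \<le> e" using assms unfolding nullz_def by blast
  show "\<exists>M. \<forall>k. M < \<bar>k\<bar> \<longrightarrow> av (c (k + t)) \<le> e"
    by (rule exI[of _ "M + \<bar>t\<bar>"]) (use M in auto)
qed

lemma av_mult3:
  assumes "av x \<le> a" "av y \<le> b" "av z \<le> c" "a \<ge> 0" "b \<ge> 0"
  shows "av (x * y * z) \<le> a * b * c"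
proof -
  have "av (x * y * z) = av x * av y * av z" by (simp add: multa)
  also have "\<dots> \<le> a * b * c" using assms nonneg by (intro mult_mono) auto
  finally show ?thesis .
qed

lemma av_mult2:
  assumes "av x \<le> a" "av y \<le> b" "a \<ge> 0"
  shows "av (x * y) \<le> a * b"
proof -
  have "av (x * y) = av x * av y" by (simp add: multa)
  also have "\<dots> \<le> a * b" using assms nonneg by (intro mult_mono) auto
  finally show ?thesis .
qed

lemma term_null:
  assumes "nullz av F" "nullz av G" shows "nullz av (\<lambda>k. F k * G (n - k))"
proof -
  obtain B where "\<forall>k. av (G k) \<le> B" using null_bounded[OF assms(2)] by blast
  then have "nullz av (\<lambda>k. G (n - k) * F k)" by (intro null_bdd_mult[OF assms(1)]) auto
  then show ?thesis by (simp add: mult.commute)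
qed

lemma mul_null:
  assumes "nullz av F" "nullz av G" shows "nullz av (laurent_mult av F G)"
  unfolding nullz_def
proof (intro allI impI)
  fix e :: real assume "e > 0"
  obtain BF where BF: "BF > 0" "\<forall>k. av (F k) \<le> BF" using null_bounded[OF assms(1)] by blast
  obtain BG where BG: "BG > 0" "\<forall>k. av (G k) \<le> BG" using null_bounded[OF assms(2)] by blast
  have "e / BG > 0" "e / BF > 0" using \<open>e>0\<close> BF BG by auto
  then obtain M1 M2 where M1: "\<forall>k. M1 < \<bar>k\<bar> \<longrightarrow> av (F k) \<le> e / BG"
    and M2: "\<forall>k. M2 < \<bar>k\<bar> \<longrightarrow> av (G k) \<le> e / BF"
    using assms unfolding nullz_def by blast
  define M0 where "M0 = max M1 M2"
  show "\<exists>M. \<forall>n. M < \<bar>n\<bar> \<longrightarrow> av (laurent_mult av F G n) \<le> e"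
  proof (intro exI[of _ "2 * \<bar>M0\<bar>"] allI impI)
    fix n assume n: "2 * \<bar>M0\<bar> < \<bar>n\<bar>"
    have "av (F k * G (n - k)) \<le> e" for k
    proof (cases "M1 < \<bar>k\<bar>")
      case True
      then have "av (F k * G (n - k)) \<le> (e / BG) * BG"
        using M1 BG \<open>e>0\<close> by (intro av_mult2) (auto intro: less_imp_le)
      then show ?thesis using BG by simp
    next
      case False
      then have "M2 < \<bar>n - k\<bar>" using n by (auto simp: M0_def)
      then have "av (F k * G (n - k)) \<le> BF * (e / BF)"
        using M2 BF by (intro av_mult2) auto
      then show ?thesis using BF by simp
    qed
    then show "av (laurent_mult av F G n) \<le> e"
      unfolding mul_zs using \<open>e>0\<close> by (intro zs_bound[OF term_null[OF assms]]) auto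
  qed
qed

lemma mul_comm:
  assumes "nullz av F" "nullz av G" shows "laurent_mult av F G = laurent_mult av G F"
proof
  fix n
  have "laurent_mult av G F n = zs av (\<lambda>k. (\<lambda>k. F k * G (n - k)) (n - k))"
    unfolding mul_zs by (simp add: mult.commute)
  also have "\<dots> = laurent_mult av F G n"
    unfolding mul_zs by (rule zs_reflect[OF term_null[OF assms]])
  finally show "laurent_mult av F G n = laurent_mult av G F n" by simp
qed

lemma mul_assoc:
  assumes F: "nullz av F" and G: "nullz av G" and H: "nullz av H"
  shows "laurent_mult av (laurent_mult av F G) H = laurent_mult av F (laurent_mult av G H)"
proof
  fix n
  define d where "d = (\<lambda>j k. F j * G (k - j) * H (n - k))"
  have L: "laurent_mult av (laurent_mult av F G) H n = zs av (\<lambda>k. zs av (\<lambda>j. d j k))"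
  proof -
    have "laurent_mult av (laurent_mult av F G) H n = zs av (\<lambda>k. H (n - k) * zs av (\<lambda>j. F j * G (k - j)))"
      unfolding mul_zs by (simp add: mult.commute)
    also have "\<dots> = zs av (\<lambda>k. zs av (\<lambda>j. H (n - k) * (F j * G (k - j))))"
      by (subst zs_cmult[OF term_null[OF F G]]) simp
    also have "\<dots> = zs av (\<lambda>k. zs av (\<lambda>j. d j k))"
      by (simp add: d_def mult.commute mult.left_commute)
    finally show ?thesis .
  qed
  have R: "laurent_mult av F (laurent_mult av G H) n = zs av (\<lambda>j. zs av (\<lambda>k. d j k))"
  proof -
    have inner: "laurent_mult av G H (n - j) = zs av (\<lambda>k. G (k - j) * H (n - k))" for j
    proof -
      have "laurent_mult av G H (n - j) = zs av (\<lambda>i. G i * H (n - j - i))" by (rule mul_zs)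
      also have "\<dots> = zs av (\<lambda>k. (\<lambda>i. G i * H (n - j - i)) (k + - j))"
        by (rule zs_shift[OF term_null[OF G H], symmetric])
      also have "\<dots> = zs av (\<lambda>k. G (k - j) * H (n - k))" by simp
      finally show ?thesis .
    qed
    have "laurent_mult av F (laurent_mult av G H) n = zs av (\<lambda>j. F j * zs av (\<lambda>k. G (k - j) * H (n - k)))"
      unfolding mul_zs[of F] using inner by simp
    also have "\<dots> = zs av (\<lambda>j. zs av (\<lambda>k. F j * (G (k - j) * H (n - k))))"
    proof -
      have "nullz av (\<lambda>k. G (k - j) * H (n - k))" for j
      proof -
        have "nullz av (\<lambda>k. (\<lambda>i. G i * H (n - j - i)) (k + - j))"
          by (rule null_shift[OF term_null[OF G H]])
        then show ?thesis by simp
      qed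
      then show ?thesis by (simp add: zs_cmult)
    qed
    also have "\<dots> = zs av (\<lambda>j. zs av (\<lambda>k. d j k))" by (simp add: d_def mult.assoc)
    finally show ?thesis .
  qed
  have "zs av (\<lambda>k. zs av (\<lambda>j. d j k)) = zs av (\<lambda>j. zs av (\<lambda>k. d j k))"
  proof (rule fubini)
    fix e :: real assume "e > 0"
    obtain BF where BF: "BF > 0" "\<forall>k. av (F k) \<le> BF" using null_bounded[OF F] by blast
    obtain BG where BG: "BG > 0" "\<forall>k. av (G k) \<le> BG" using null_bounded[OF G] by blast
    obtain BH where BH: "BH > 0" "\<forall>k. av (H k) \<le> BH" using null_bounded[OF H] by blast
    have "e / (BG * BH) > 0" "e / (BF * BG) > 0" using \<open>e>0\<close> BF BG BH by auto
    then obtain M1 M3 where M1: "\<forall>k. M1 < \<bar>k\<bar> \<longrightarrow> av (F k) \<le> e / (BG * BH)"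
      and M3: "\<forall>k. M3 < \<bar>k\<bar> \<longrightarrow> av (H k) \<le> e / (BF * BG)"
      using F H unfolding nullz_def by blast
    show "\<exists>M. \<forall>j k. (M < \<bar>j\<bar> \<or> M < \<bar>k\<bar>) \<longrightarrow> av (d j k) \<le> e"
    proof (intro exI[of _ "max M1 (M3 + \<bar>n\<bar>)"] allI impI)
      fix j k assume jk: "max M1 (M3 + \<bar>n\<bar>) < \<bar>j\<bar> \<or> max M1 (M3 + \<bar>n\<bar>) < \<bar>k\<bar>"
      show "av (d j k) \<le> e"
      proof (cases "M1 < \<bar>j\<bar>")
        case True
        then have "av (d j k) \<le> (e / (BG * BH)) * BG * BH"
          unfolding d_def using M1 BG BH \<open>e>0\<close> by (intro av_mult3) auto
        then show ?thesis using BG BH by simp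
      next
        case False
        then have "M3 < \<bar>n - k\<bar>" using jk by auto
        then have "av (d j k) \<le> BF * BG * (e / (BF * BG))"
          unfolding d_def using M3 BF BG by (intro av_mult3) auto
        then show ?thesis using BF BG by simp
      qed
    qed
  qed
  then show "laurent_mult av (laurent_mult av F G) H n = laurent_mult av F (laurent_mult av G H) n"
    using L R by simp
qed

lemma mul_add_left:
  assumes "nullz av A" "nullz av B" "nullz av X"
  shows "laurent_mult av (\<lambda>n. A n + B n) X = (\<lambda>n. laurent_mult av A X n + laurent_mult av B X n)"
proof
  fix n
  have "laurent_mult av (\<lambda>n. A n + B n) X n = zs av (\<lambda>k. A k * X (n - k) + B k * X (n - k))"
    unfolding mul_zs by (simp add: distrib_right)
  also have "\<dots> = laurent_mult av A X n + laurent_mult av B X n"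
    unfolding mul_zs by (rule zs_add[OF term_null[OF assms(1,3)] term_null[OF assms(2,3)]])
  finally show "laurent_mult av (\<lambda>n. A n + B n) X n = laurent_mult av A X n + laurent_mult av B X n" .
qed

lemma mul_cmult_left:
  assumes "nullz av A" "nullz av X"
  shows "laurent_mult av (\<lambda>n. c * A n) X = (\<lambda>n. c * laurent_mult av A X n)"
proof
  fix n
  have "laurent_mult av (\<lambda>n. c * A n) X n = zs av (\<lambda>k. c * (A k * X (n - k)))"
    unfolding mul_zs by (simp add: mult.assoc)
  also have "\<dots> = c * laurent_mult av A X n"
    unfolding mul_zs by (rule zs_cmult[OF term_null[OF assms]])
  finally show "laurent_mult av (\<lambda>n. c * A n) X n = c * laurent_mult av A X n" .
qed

lemma mul_one_left: "laurent_mult av laurent_one F = F"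
proof
  fix n
  have "(\<lambda>k. laurent_one k * F (n - k)) = (\<lambda>k. if k = 0 then F n else 0)"
    by (auto simp: laurent_one_def)
  then show "laurent_mult av laurent_one F n = F n" unfolding mul_zs using zs_single by simp
qed

lemma mul_mono: "laurent_mult av (zmono a x) (zmono b y) = zmono (a + b) (x * y)"
proof
  fix n
  have "(\<lambda>k. zmono a x k * zmono b y (n - k)) = (\<lambda>k. if k = a then zmono (a + b) (x * y) n else 0)"
    by (auto simp: zmono_def)
  then show "laurent_mult av (zmono a x) (zmono b y) n = zmono (a + b) (x * y) n"
    unfolding mul_zs using zs_single by simp
qed

lemma null_one: "nullz av (laurent_one :: int \<Rightarrow> 'a)"
  unfolding nullz_def laurent_one_def by (intro allI impI exI[of _ 0]) auto

lemma null_pow: "nullz av F \<Longrightarrow> nullz av (laurent_pow av F m)"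
  by (induction m) (auto simp: null_one mul_null)

lemma null_Dz: "nullz av F \<Longrightarrow> nullz av (Dz F)"
proof (rule null_mono)
  fix k
  have "av (Dz F k) = av (of_int k) * av (F k)" by (simp add: Dz_def multa)
  also have "\<dots> \<le> 1 * av (F k)" using av_of_int nonneg by (intro mult_right_mono) auto
  finally show "av (Dz F k) \<le> av (F k)" by simp
qed

lemma leibniz:
  assumes "nullz av F" "nullz av G"
  shows "Dz (laurent_mult av F G) = (\<lambda>n. laurent_mult av (Dz F) G n + laurent_mult av F (Dz G) n)"
proof
  fix n
  have "Dz (laurent_mult av F G) n = zs av (\<lambda>k. of_int n * (F k * G (n - k)))"
    unfolding Dz_def mul_zs by (rule zs_cmult[OF term_null[OF assms], symmetric])
  also have "(\<lambda>k. of_int n * (F k * G (n - k))) = (\<lambda>k. Dz F k * G (n - k) + F k * Dz G (n - k))"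
    by (auto simp: Dz_def algebra_simps)
  also have "zs av \<dots> = laurent_mult av (Dz F) G n + laurent_mult av F (Dz G) n"
    unfolding mul_zs
    by (rule zs_add[OF term_null[OF null_Dz[OF assms(1)] assms(2)] term_null[OF assms(1) null_Dz[OF assms(2)]]])
  finally show "Dz (laurent_mult av F G) n = laurent_mult av (Dz F) G n + laurent_mult av F (Dz G) n" .
qed

lemma D_pow:
  assumes f: "nullz av f"
  shows "Dz (laurent_pow av f (Suc m)) = (\<lambda>n. of_nat (Suc m) * laurent_mult av (laurent_pow av f m) (Dz f) n)"
proof (induction m)
  case 0
  show ?case by (simp add: mul_one_left)
next
  case (Suc m)
  let ?P = "laurent_pow av f"
  let ?g = "Dz f"
  have nP: "nullz av (?P j)" for j by (rule null_pow[OF f])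
  have ng: "nullz av ?g" by (rule null_Dz[OF f])
  have key: "laurent_mult av (laurent_mult av (?P m) ?g) f = laurent_mult av (?P (Suc m)) ?g"
  proof -
    have "laurent_mult av (laurent_mult av (?P m) ?g) f = laurent_mult av (?P m) (laurent_mult av ?g f)"
      by (rule mul_assoc[OF nP ng f])
    also have "\<dots> = laurent_mult av (?P m) (laurent_mult av f ?g)" by (simp add: mul_comm[OF ng f])
    also have "\<dots> = laurent_mult av (laurent_mult av (?P m) f) ?g"
      by (rule mul_assoc[OF nP f ng, symmetric])
    finally show ?thesis by simp
  qed
  have "Dz (?P (Suc (Suc m))) = Dz (laurent_mult av (?P (Suc m)) f)" by simp
  also have "\<dots> = (\<lambda>n. laurent_mult av (Dz (?P (Suc m))) f n + laurent_mult av (?P (Suc m)) ?g n)"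
    by (rule leibniz[OF nP f])
  also have "laurent_mult av (Dz (?P (Suc m))) f = (\<lambda>n. of_nat (Suc m) * laurent_mult av (laurent_mult av (?P m) ?g) f n)"
    unfolding Suc.IH by (rule mul_cmult_left[OF mul_null[OF nP ng] f])
  also have "\<dots> = (\<lambda>n. of_nat (Suc m) * laurent_mult av (?P (Suc m)) ?g n)" using key by simp
  finally show ?case by (simp add: algebra_simps)
qed

end



definition lead :: "('a::field_char_0 \<Rightarrow> real) \<Rightarrow> (int \<Rightarrow> 'a) \<Rightarrow> int \<Rightarrow> real \<Rightarrow> bool" where
  "lead av F a T \<longleftrightarrow> T > 0 \<and> av (F a) = T \<and> (\<forall>n. av (F n) \<le> T) \<and> (\<forall>n<a. av (F n) < T)"

context vf begin

lemma lead_exists: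
  assumes "nullz av F" "F \<noteq> (\<lambda>_. 0)" shows "\<exists>a T. lead av F a T"
proof -
  obtain n0 where n0: "F n0 \<noteq> 0" using assms(2) by auto
  define t0 where "t0 = av (F n0)"
  have t0: "t0 > 0" using n0 zero_iff nonneg by (metis order_le_less t0_def)
  obtain M where M: "\<forall>k. M < \<bar>k\<bar> \<longrightarrow> av (F k) \<le> t0/2"
    using assms(1) t0 unfolding nullz_def by (meson half_gt_zero)
  define I where "I = {-\<bar>M\<bar>..\<bar>M\<bar>}"
  have n0I: "n0 \<in> I"
  proof (rule ccontr)
    assume "n0 \<notin> I"
    then have "M < \<bar>n0\<bar>" by (auto simp: I_def)
    then have "t0 \<le> t0/2" using M by (simp add: t0_def)
    then show False using t0 by simp
  qed
  define T where "T = Max ((\<lambda>k. av (F k)) ` I)"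
  have finI: "finite I" by (simp add: I_def)
  have inI: "av (F k) \<le> T" if "k \<in> I" for k unfolding T_def using finI that by (intro Max_ge) auto
  have Tt0: "t0 \<le> T" using inI[OF n0I] by (simp add: t0_def)
  have outI: "av (F k) \<le> t0/2" if "k \<notin> I" for k using that M by (auto simp: I_def)
  have all: "av (F k) \<le> T" for k using inI outI Tt0 t0 by (cases "k \<in> I") fastforce+
  define A where "A = {k \<in> I. av (F k) = T}"
  have "T \<in> (\<lambda>k. av (F k)) ` I" unfolding T_def using finI n0I by (intro Max_in) auto
  then have Ane: "A \<noteq> {}" by (auto simp: A_def)
  have finA: "finite A" using finI by (simp add: A_def)
  define a where "a = Min A"
  have aA: "a \<in> A" unfolding a_def using finA Ane by (rule Min_in)
  have below: "av (F n) < T" if "n < a" for n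
  proof (cases "n \<in> I")
    case True
    have "n \<notin> A" using that finA unfolding a_def by (meson Min_le not_le)
    then have "av (F n) \<noteq> T" using True by (auto simp: A_def)
    then show ?thesis using all[of n] by simp
  next
    case False
    then show ?thesis using outI[of n] Tt0 t0 by simp
  qed
  have "lead av F a T" unfolding lead_def using aA all below Tt0 t0 by (auto simp: A_def)
  then show ?thesis by blast
qed

lemma lead_unique:
  assumes "lead av F a T" "lead av F b S" shows "a = b \<and> T = S"
proof -
  have "T = S" using assms unfolding lead_def by (metis order_antisym)
  moreover have "a = b"
  proof (rule ccontr)
    assume "a \<noteq> b"
    then consider "a < b" | "b < a" by linarith
    then show False using assms \<open>T = S\<close> unfolding lead_def by (metis less_irrefl)
  qed
  ultimately show ?thesis by simp
qed

lemma lead_mul: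
  assumes F: "nullz av F" and G: "nullz av G" and lF: "lead av F a T" and lG: "lead av G b S"
  shows "lead av (laurent_mult av F G) (a + b) (T * S)"
proof -
  have T: "T > 0" "av (F a) = T" "\<And>n. av (F n) \<le> T" "\<And>n. n < a \<Longrightarrow> av (F n) < T"
    using lF unfolding lead_def by auto
  have S: "S > 0" "av (G b) = S" "\<And>n. av (G n) \<le> S" "\<And>n. n < b \<Longrightarrow> av (G n) < S"
    using lG unfolding lead_def by auto
  have le: "av (F k * G (n - k)) \<le> T * S" for k n
    using T S by (intro av_mult2) (auto intro: less_imp_le)
  have lt: "av (F k * G (n - k)) < T * S" if "k < a \<or> n - k < b" for k n
  proof -
    have "av (F k * G (n - k)) = av (F k) * av (G (n - k))" by (rule multa)
    also have "\<dots> < T * S"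
    proof (cases "k < a")
      case True
      have "av (F k) * av (G (n - k)) \<le> av (F k) * S" using S nonneg by (intro mult_left_mono) auto
      also have "\<dots> < T * S" using T(4)[OF True] S by simp
      finally show ?thesis .
    next
      case False
      then have "n - k < b" using that by simp
      have "av (F k) * av (G (n - k)) \<le> T * av (G (n - k))" using T nonneg by (intro mult_right_mono) auto
      also have "\<dots> < T * S" using S(4)[OF \<open>n - k < b\<close>] T by simp
      finally show ?thesis .
    qed
    finally show ?thesis .
  qed
  have tn: "nullz av (\<lambda>k. F k * G (n - k))" for n by (rule term_null[OF F G])
  have p1: "av (laurent_mult av F G n) \<le> T * S" for n
    unfolding mul_zs using T S le by (intro zs_bound[OF tn]) auto
  have p2: "av (laurent_mult av F G n) < T * S" if "n < a + b" for n
    unfolding mul_zs using that by (intro zs_strict[OF tn] lt) linarith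
  have p3: "av (laurent_mult av F G (a + b)) = T * S"
  proof -
    define c where "c = (\<lambda>k. F k * G (a + b - k))"
    define c' where "c' = (\<lambda>k. if k = a then 0 else c k)"
    have nc: "nullz av c" unfolding c_def by (rule tn)
    have nc': "nullz av c'" by (rule null_mono[OF nc]) (auto simp: c'_def nonneg)
    have ns: "nullz av (\<lambda>k. if k = a then c a else 0)"
      unfolding nullz_def by (intro allI impI exI[of _ "\<bar>a\<bar>"]) auto
    have "c = (\<lambda>k. (if k = a then c a else 0) + c' k)" by (auto simp: c'_def)
    then have "zs av c = zs av (\<lambda>k. if k = a then c a else 0) + zs av c'"
      using zs_add[OF ns nc'] by metis
    also have "\<dots> = c a + zs av c'" by (simp add: zs_single)
    finally have eq: "zs av c = c a + zs av c'" .
    have ca: "av (c a) = T * S" unfolding c_def using T S by (simp add: multa)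
    have "av (c' k) < T * S" for k
    proof (cases "k = a")
      case True then show ?thesis using T S by (simp add: c'_def)
    next
      case False
      then have "k < a \<or> a + b - k < b" by linarith
      then show ?thesis using lt False by (simp add: c'_def c_def)
    qed
    then have "av (zs av c') < T * S" by (rule zs_strict[OF nc'])
    then have "av (c a + zs av c') = T * S" using av_strict ca by simp
    then show ?thesis using eq unfolding mul_zs c_def by simp
  qed
  show ?thesis unfolding lead_def using p1 p2 p3 T S by simp
qed

lemma null_phi:
  assumes "q > 0" "nullz av F" shows "nullz av (laurent_subst_pow F q)"
  unfolding nullz_def
proof (intro allI impI)
  fix e :: real assume "e > 0"
  then obtain M where M: "\<forall>k. M < \<bar>k\<bar> \<longrightarrow> av (F k) \<le> e" using assms unfolding nullz_def by blast
  show "\<exists>M. \<forall>k. M < \<bar>k\<bar> \<longrightarrow> av (laurent_subst_pow F q k) \<le> e"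
  proof (intro exI[of _ "int q * \<bar>M\<bar>"] allI impI)
    fix k assume k: "int q * \<bar>M\<bar> < \<bar>k\<bar>"
    show "av (laurent_subst_pow F q k) \<le> e"
    proof (cases "int q dvd k")
      case True
      then obtain m where m: "k = int q * m" by blast
      then have "int q * \<bar>M\<bar> < int q * \<bar>m\<bar>" using k by (simp add: abs_mult)
      then have "\<bar>M\<bar> < \<bar>m\<bar>" using assms(1) by (simp add: mult_less_cancel_left)
      then have "av (F m) \<le> e" using M by auto
      then show ?thesis using True m assms(1) by (simp add: laurent_subst_pow_def)
    next
      case False then show ?thesis using \<open>e>0\<close> by (simp add: laurent_subst_pow_def)
    qed
  qed
qed

lemma lead_phi:
  assumes "q > 0" "lead av F a T" shows "lead av (laurent_subst_pow F q) (int q * a) T"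
proof -
  have T: "T > 0" "av (F a) = T" "\<And>n. av (F n) \<le> T" "\<And>n. n < a \<Longrightarrow> av (F n) < T"
    using assms(2) unfolding lead_def by auto
  have 1: "laurent_subst_pow F q (int q * a) = F a" using assms(1) by (simp add: laurent_subst_pow_def)
  have 2: "av (laurent_subst_pow F q n) \<le> T" for n using T by (simp add: laurent_subst_pow_def)
  have 3: "av (laurent_subst_pow F q n) < T" if "n < int q * a" for n
  proof (cases "int q dvd n")
    case True
    then obtain m where m: "n = int q * m" by blast
    then have "m < a" using that assms(1) by (simp add: mult_less_cancel_left)
    then show ?thesis using T(4) m assms(1) by (simp add: laurent_subst_pow_def)
  next
    case False then show ?thesis using T by (simp add: laurent_subst_pow_def)
  qed
  show ?thesis unfolding lead_def using 1 2 3 T by simp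
qed

lemma phi_lin:
  "laurent_subst_pow (\<lambda>n. A n - c * B n :: 'a) q = (\<lambda>n. laurent_subst_pow A q n - c * laurent_subst_pow B q n)"
  by (rule ext) (simp add: laurent_subst_pow_def)

lemma D_phi:
  assumes "q > 0"
  shows "Dz (laurent_subst_pow F q) = (\<lambda>n. of_nat q * laurent_subst_pow (Dz F) q n)"
proof
  fix n
  show "Dz (laurent_subst_pow F q) n = of_nat q * laurent_subst_pow (Dz F) q n"
  proof (cases "int q dvd n")
    case True
    then obtain m where m: "n = int q * m" by blast
    then show ?thesis using assms by (simp add: laurent_subst_pow_def Dz_def)
  next
    case False then show ?thesis by (simp add: laurent_subst_pow_def Dz_def)
  qed
qed

lemma propL:
  assumes q: "q > 1" and F: "nullz av F" and H: "nullz av H" and F0: "F \<noteq> (\<lambda>_. 0)"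
    and eq: "laurent_mult av H (laurent_subst_pow F q) = laurent_mult av (laurent_subst_pow H q) F"
  shows "\<exists>c. \<forall>n. H n = c * F n"
proof -
  obtain a T where lF: "lead av F a T" using lead_exists[OF F F0] by blast
  have Fa: "F a \<noteq> 0" using lF zero_iff unfolding lead_def by auto
  define c where "c = H a / F a"
  define H' where "H' = (\<lambda>n. H n - c * F n)"
  have q0: "q > 0" using q by simp
  have nH': "nullz av H'" unfolding H'_def using null_add[OF H null_cmult[OF F, of "-c"]] by simp
  have nphiF: "nullz av (laurent_subst_pow F q)" by (rule null_phi[OF q0 F])
  have nphiH: "nullz av (laurent_subst_pow H q)" by (rule null_phi[OF q0 H])
  have mdiff: "laurent_mult av (\<lambda>n. A n - c * B n) X = (\<lambda>n. laurent_mult av A X n - c * laurent_mult av B X n)"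
    if "nullz av A" "nullz av B" "nullz av X" for A B X
  proof -
    have "laurent_mult av (\<lambda>n. A n + (- c) * B n) X = (\<lambda>n. laurent_mult av A X n + laurent_mult av (\<lambda>n. (- c) * B n) X n)"
      by (rule mul_add_left[OF that(1) null_cmult[OF that(2)] that(3)])
    also have "laurent_mult av (\<lambda>n. (- c) * B n) X = (\<lambda>n. (- c) * laurent_mult av B X n)"
      by (rule mul_cmult_left[OF that(2,3)])
    finally show ?thesis by simp
  qed
  have eq': "laurent_mult av H' (laurent_subst_pow F q) = laurent_mult av (laurent_subst_pow H' q) F"
  proof -
    have "laurent_mult av H' (laurent_subst_pow F q) =
        (\<lambda>n. laurent_mult av H (laurent_subst_pow F q) n - c * laurent_mult av F (laurent_subst_pow F q) n)"
      unfolding H'_def by (rule mdiff[OF H F nphiF])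
    also have "\<dots> = (\<lambda>n. laurent_mult av (laurent_subst_pow H q) F n - c * laurent_mult av (laurent_subst_pow F q) F n)"
      using eq mul_comm[OF F nphiF] by simp
    also have "\<dots> = laurent_mult av (\<lambda>n. laurent_subst_pow H q n - c * laurent_subst_pow F q n) F"
      by (rule mdiff[OF nphiH nphiF F, symmetric])
    also have "\<dots> = laurent_mult av (laurent_subst_pow H' q) F"
      unfolding H'_def phi_lin ..
    finally show ?thesis .
  qed
  have "H' = (\<lambda>_. 0)"
  proof (rule ccontr)
    assume "H' \<noteq> (\<lambda>_. 0)"
    then obtain a' T' where lH: "lead av H' a' T'" using lead_exists[OF nH'] by blast
    have l1: "lead av (laurent_mult av H' (laurent_subst_pow F q)) (a' + int q * a) (T' * T)"
      by (rule lead_mul[OF nH' nphiF lH lead_phi[OF q0 lF]])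
    have l2: "lead av (laurent_mult av (laurent_subst_pow H' q) F) (int q * a' + a) (T' * T)"
      by (rule lead_mul[OF null_phi[OF q0 nH'] F lead_phi[OF q0 lH] lF])
    have "a' + int q * a = int q * a' + a" using lead_unique[OF l1] l2 eq' by simp
    then have "(int q - 1) * (a' - a) = 0" by (simp add: algebra_simps)
    then have "a' = a" using q by simp
    moreover have "H' a = 0" using Fa by (simp add: H'_def c_def)
    ultimately show False using lH zero_iff unfolding lead_def by auto
  qed
  then have "\<forall>n. H n = c * F n" unfolding H'_def by (metis eq_iff_diff_eq_0)
  then show ?thesis by blast
qed

end



theorem mainTheorem5:
  fixes p q :: nat and av :: "'a::field_char_0 \<Rightarrow> real" and K :: "'a set"
    and f :: "int \<Rightarrow> 'a" and \<zeta> \<zeta>' :: 'a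
  assumes "is_Cp p av"
    and "padic_number_field av K"
    and "A_K11 av K f"
    and "\<exists>k\<ge>1. q = p ^ k"
    and "\<zeta> \<in> roots_of_unity" and "\<zeta>' \<in> roots_of_unity"
    and "laurent_eval_to av f \<zeta> \<zeta>'"
    and "laurent_pow av f q = laurent_subst_pow f q"
  shows "special f"
proof -
  have cp: "prime p \<and> (\<forall>x. av x \<ge> 0) \<and> (\<forall>x. av x = 0 \<longleftrightarrow> x = 0) \<and>
     (\<forall>x y. av (x * y) = av x * av y) \<and>
     (\<forall>x y. av (x + y) \<le> max (av x) (av y)) \<and>
     (\<forall>s. av_cauchy av s \<longrightarrow> (\<exists>l. av_lim av s l))"
    using assms(1) unfolding is_Cp_def by blast
  interpret vf av
    by (unfold_locales) (use cp in blast)+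
  have p2: "p \<ge> 2" using cp prime_ge_2_nat by blast
  obtain k where k: "k \<ge> 1" "q = p ^ k" using assms(4) by blast
  have "p ^ 1 \<le> p ^ k" using k p2 by (intro power_increasing) auto
  then have q2: "q \<ge> 2" using p2 k by simp
  have nf: "nullz av f"
    unfolding nullz_def
  proof (intro allI impI)
    fix e :: real assume "e > 0"
    then obtain N :: nat where N: "\<forall>n. \<bar>n\<bar> \<ge> int N \<longrightarrow> av (f n) < e"
      using assms(3) unfolding A_K11_def by blast
    show "\<exists>M. \<forall>k. M < \<bar>k\<bar> \<longrightarrow> av (f k) \<le> e"
      by (rule exI[of _ "int N"]) (use N in \<open>auto intro: less_imp_le\<close>)
  qed
  have f0: "f \<noteq> (\<lambda>_. 0)"
  proof
    assume f0: "f = (\<lambda>_. 0)"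
    have "av_lim av (\<lambda>N. 0) \<zeta>'" using assms(7) f0 unfolding laurent_eval_to_def by simp
    moreover have "av_lim av (\<lambda>N. 0) (0::'a)" by (rule lim_eventually_const) simp
    ultimately have "\<zeta>' = 0" using lim_unique by blast
    have "\<zeta>' \<noteq> 0"
    proof
      assume z: "\<zeta>' = 0"
      obtain n :: nat where n: "n > 0" "\<zeta>' ^ n = 1" using assms(6) unfolding roots_of_unity_def by blast
      have "\<zeta>' ^ n = 0" using z n(1) by (simp add: zero_power)
      then show False using n(2) by simp
    qed
    then show False using \<open>\<zeta>' = 0\<close> by blast
  qed
  define g where "g = Dz f"
  define P where "P = laurent_pow av f"
  have q0: "q > 0" using q2 by simp
  have nP: "nullz av (P j)" for j unfolding P_def by (rule null_pow[OF nf])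
  have ng: "nullz av g" unfolding g_def by (rule null_Dz[OF nf])
  have Pq: "P q = P (Suc (q - 1))" using q0 by simp
  have e1: "Dz (P q) = (\<lambda>n. of_nat q * laurent_mult av (P (q - 1)) g n)"
    unfolding Pq P_def g_def using D_pow[OF nf, of "q - 1"] q0 by simp
  have e2: "Dz (P q) = (\<lambda>n. of_nat q * laurent_subst_pow g q n)"
    unfolding P_def g_def assms(8) by (rule D_phi[OF q0])
  have phig: "laurent_subst_pow g q = laurent_mult av (P (q - 1)) g"
  proof (rule ext)
    fix n
    have "of_nat q * laurent_subst_pow g q n = of_nat q * laurent_mult av (P (q - 1)) g n"
      using fun_cong[OF e1, of n] fun_cong[OF e2, of n] by simp
    moreover have "(of_nat q :: 'a) \<noteq> 0" using q0 by simp
    ultimately show "laurent_subst_pow g q n = laurent_mult av (P (q - 1)) g n" by simp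
  qed
  have "laurent_mult av (laurent_subst_pow g q) f = laurent_mult av (laurent_mult av (P (q - 1)) g) f"
    using phig by simp
  also have "\<dots> = laurent_mult av (P (q - 1)) (laurent_mult av g f)" by (rule mul_assoc[OF nP ng nf])
  also have "\<dots> = laurent_mult av (P (q - 1)) (laurent_mult av f g)" by (simp add: mul_comm[OF ng nf])
  also have "\<dots> = laurent_mult av (laurent_mult av (P (q - 1)) f) g" by (rule mul_assoc[OF nP nf ng, symmetric])
  also have "laurent_mult av (P (q - 1)) f = P q" unfolding Pq by (simp add: P_def)
  also have "P q = laurent_subst_pow f q" unfolding P_def by (rule assms(8))
  also have "laurent_mult av (laurent_subst_pow f q) g = laurent_mult av g (laurent_subst_pow f q)"
    by (rule mul_comm[OF null_phi[OF q0 nf] ng])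
  finally have "laurent_mult av g (laurent_subst_pow f q) = laurent_mult av (laurent_subst_pow g q) f" ..
  then obtain c where c: "\<forall>n. g n = c * f n" using propL[of q f g] q2 nf ng f0 by auto
  obtain m where m: "f m \<noteq> 0" using f0 by auto
  define \<eta> where "\<eta> = f m"
  have supp: "f n = 0" if "n \<noteq> m" for n
  proof (rule ccontr)
    assume fn: "f n \<noteq> 0"
    have "of_int n = c" using c[rule_format, of n] fn by (simp add: g_def Dz_def)
    moreover have "of_int m = c" using c[rule_format, of m] m by (simp add: g_def Dz_def)
    ultimately have "(of_int n :: 'a) = of_int m" by simp
    then show False using that by simp
  qed
  have fmono: "f = zmono m \<eta>" by (rule ext) (auto simp: zmono_def \<eta>_def supp)
  have Pj: "P j = zmono (int j * m) (\<eta> ^ j)" for j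
  proof (induction j)
    case 0 show ?case by (rule ext) (simp add: P_def laurent_one_def zmono_def)
  next
    case (Suc j)
    have "P (Suc j) = laurent_mult av (P j) f" by (simp add: P_def)
    also have "\<dots> = zmono (int j * m + m) (\<eta> ^ j * \<eta>)" unfolding Suc fmono by (rule mul_mono)
    finally show ?case by (simp add: algebra_simps)
  qed
  have "laurent_subst_pow f q (int q * m) = \<eta>" using q0 by (simp add: laurent_subst_pow_def \<eta>_def)
  moreover have "P q (int q * m) = \<eta> ^ q" by (simp add: Pj zmono_def)
  ultimately have eta: "\<eta> ^ q = \<eta>" using assms(8) by (simp add: P_def)
  have "\<eta> ^ (q - 1) * \<eta> = \<eta> ^ Suc (q - 1)" by (simp only: power_Suc2)
  also have "Suc (q - 1) = q" using q0 by simp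
  finally have "\<eta> ^ (q - 1) * \<eta> = 1 * \<eta>" using eta by simp
  then have "\<eta> ^ (q - 1) = 1" using m by (simp add: \<eta>_def)
  then have "\<eta> \<in> roots_of_unity" unfolding roots_of_unity_def using q2 by (intro CollectI exI[of _ "q - 1"]) auto
  then show ?thesis unfolding special_def using fmono by (auto simp: zmono_def)
qed


end
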